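(* Let $(N,+,* )$ be a planar nearring presented by $(\Phi,R,M)$, and suppose some $d\in D(N)$ is nonzero and not a zero multiplier. Let $K$ be the set of zero multipliers of $N$ and $F=d*N$. Then: $F=d\Phi\cup\{0\}$ is a subnearring of $N$ which is a nearfield whose multiplicative group $F\setminus\{0\}$ is isomorphic to $\Phi$; $K$ is a normal subgroup of $(N,+)$ invariant under $\Phi$ (so $\Phi$ acts on $K$ as a group of fixed point free automorphisms); $(N,+)$ is the internal semidirect product $K\rtimes F$, i.e. every element of $N$ is uniquely $k+f$ with $k\in K$, $f\in F$; and for $k,k'\in K$, $f,f'\in F$, $$(k+f)*(k'+f')=\begin{cases}0 & f'=0,\\ k\phi_{f'}+f\phi_{f'} & f'\ne0,\end{cases}$$ where for nonzero $f'$, $\phi_{f'}\in\Phi$ is defined by $f'=r_{f'}\phi_{f'}$ with $r_{f'}\in R$. Moreover $K$ is an ideal of $N$.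
   Context: A (right) nearring $(N,+,* )$ is a set with a group $(N,+)$, a semigroup $(N,* )$, and right distributivity $(a+b)*c=a*c+b*c$. $N$ is planar if the relation $a\cong b$ ($x*a=x*b$ for all $x$) has at least $3$ classes and for all $a,b,c$ with $a\not\cong b$ the equation $x*a=x*b+c$ has a unique solution. A nearfield is a nearring in which $(N\setminus\{0\},* )$ is a group. An ideal is a normal additive subgroup $I$ with $i*n\in I$ and $n*m-n*(m+i)\in I$ for all $i\in I$, $n,m\in N$. Every planar nearring arises as follows, and we always consider it so presented. $\Phi\le \mathrm{Aut}(N,+)$ acts on the right, is fixed point free, and $n\mapsto -n+n\phi$ is bijective for each $\phi\ne\mathrm{id}$. $R$ is a set of representatives of the $\Phi$-orbits of $N\setminus\{0\}$ and $M\subseteq R$. Each $a\ne0$ is uniquely $a=r_a\phi_a$, $r_a\in R$, $\phi_a\in\Phi$. Multiplication: $a*b=0$ if $b=0$ or $r_b\in M$, else $a*b=a\phi_b$ (and $0*b=0$). The zero multipliers are the elements of $M\Phi\cup\{0\}$, i.e. those $n$ with $x*n=0$ for all $x$. $D(N)=\{n: n*(a+b)=n*a+n*b\ \forall a,b\}$. *)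

theory Defs
  imports Main
begin

text \<open>Automorphisms act on the right; we write the image of n under phi as phi n, so the
  product phi psi (first phi, then psi) is the function psi o phi.\<close>

definition additive_aut :: "('a::group_add \<Rightarrow> 'a) \<Rightarrow> bool" where
  "additive_aut \<phi> \<longleftrightarrow> bij \<phi> \<and> (\<forall>x y. \<phi> (x + y) = \<phi> x + \<phi> y)"

text \<open>Data (Phi, R, M) presenting a planar nearring (Ferrero pair + orbit representatives).\<close>
definition ferrero_data :: "('a::group_add \<Rightarrow> 'a) set \<Rightarrow> 'a set \<Rightarrow> 'a set \<Rightarrow> bool" where
  "ferrero_data \<Phi> R M \<longleftrightarrow>
     (\<forall>\<phi>\<in>\<Phi>. additive_aut \<phi>) \<and>
     id \<in> \<Phi> \<and> (\<forall>\<phi>\<in>\<Phi>. \<forall>\<psi>\<in>\<Phi>. \<psi> \<circ> \<phi> \<in> \<Phi>) \<and> (\<forall>\<phi>\<in>\<Phi>. inv \<phi> \<in> \<Phi>) \<and>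
     (\<forall>\<phi>\<in>\<Phi>. \<phi> \<noteq> id \<longrightarrow> (\<forall>n. \<phi> n = n \<longrightarrow> n = 0)) \<and>
     (\<forall>\<phi>\<in>\<Phi>. \<phi> \<noteq> id \<longrightarrow> bij (\<lambda>n. - n + \<phi> n)) \<and>
     0 \<notin> R \<and> (\<forall>a. a \<noteq> 0 \<longrightarrow> (\<exists>!r. r \<in> R \<and> (\<exists>\<phi>\<in>\<Phi>. a = \<phi> r))) \<and>
     M \<subseteq> R"

definition rep_of :: "('a::group_add \<Rightarrow> 'a) set \<Rightarrow> 'a set \<Rightarrow> 'a \<Rightarrow> 'a" where
  "rep_of \<Phi> R a = (THE r. r \<in> R \<and> (\<exists>\<phi>\<in>\<Phi>. a = \<phi> r))"

definition phi_of :: "('a::group_add \<Rightarrow> 'a) set \<Rightarrow> 'a set \<Rightarrow> 'a \<Rightarrow> ('a \<Rightarrow> 'a)" where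
  "phi_of \<Phi> R a = (THE \<phi>. \<phi> \<in> \<Phi> \<and> (\<exists>r\<in>R. a = \<phi> r))"

definition ferrero_mult :: "('a::group_add \<Rightarrow> 'a) set \<Rightarrow> 'a set \<Rightarrow> 'a set \<Rightarrow> 'a \<Rightarrow> 'a \<Rightarrow> 'a" where
  "ferrero_mult \<Phi> R M a b =
     (if b = 0 \<or> rep_of \<Phi> R b \<in> M then 0 else phi_of \<Phi> R b a)"

definition nearring :: "('a::group_add \<Rightarrow> 'a \<Rightarrow> 'a) \<Rightarrow> bool" where
  "nearring mul \<longleftrightarrow> (\<forall>a b c. mul (mul a b) c = mul a (mul b c)) \<and>
                     (\<forall>a b c. mul (a + b) c = mul a c + mul b c)"

definition mequiv :: "('a \<Rightarrow> 'a \<Rightarrow> 'a) \<Rightarrow> 'a \<Rightarrow> 'a \<Rightarrow> bool" where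
  "mequiv mul a b \<longleftrightarrow> (\<forall>x. mul x a = mul x b)"

definition planar_nearring :: "('a::group_add \<Rightarrow> 'a \<Rightarrow> 'a) \<Rightarrow> bool" where
  "planar_nearring mul \<longleftrightarrow> nearring mul \<and>
     (\<exists>a b c. \<not> mequiv mul a b \<and> \<not> mequiv mul a c \<and> \<not> mequiv mul b c) \<and>
     (\<forall>a b c. \<not> mequiv mul a b \<longrightarrow> (\<exists>!x. mul x a = mul x b + c))"

definition distrib_elems :: "('a::group_add \<Rightarrow> 'a \<Rightarrow> 'a) \<Rightarrow> 'a set" where
  "distrib_elems mul = {n. \<forall>a b. mul n (a + b) = mul n a + mul n b}"

definition zero_multipliers :: "('a::zero \<Rightarrow> 'a \<Rightarrow> 'a) \<Rightarrow> 'a set" where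
  "zero_multipliers mul = {n. \<forall>x. mul x n = 0}"

definition add_subgroup :: "'a::group_add set \<Rightarrow> bool" where
  "add_subgroup S \<longleftrightarrow> 0 \<in> S \<and> (\<forall>x\<in>S. \<forall>y\<in>S. x + y \<in> S) \<and> (\<forall>x\<in>S. - x \<in> S)"

definition normal_add_subgroup :: "'a::group_add set \<Rightarrow> bool" where
  "normal_add_subgroup S \<longleftrightarrow> add_subgroup S \<and> (\<forall>n. \<forall>k\<in>S. n + k + - n \<in> S)"

definition subnearring :: "('a::group_add \<Rightarrow> 'a \<Rightarrow> 'a) \<Rightarrow> 'a set \<Rightarrow> bool" where
  "subnearring mul S \<longleftrightarrow> add_subgroup S \<and> (\<forall>x\<in>S. \<forall>y\<in>S. mul x y \<in> S)"

definition is_group_on :: "'a set \<Rightarrow> ('a \<Rightarrow> 'a \<Rightarrow> 'a) \<Rightarrow> bool" where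
  "is_group_on S f \<longleftrightarrow>
     (\<forall>x\<in>S. \<forall>y\<in>S. f x y \<in> S) \<and>
     (\<forall>x\<in>S. \<forall>y\<in>S. \<forall>z\<in>S. f (f x y) z = f x (f y z)) \<and>
     (\<exists>e\<in>S. (\<forall>x\<in>S. f e x = x \<and> f x e = x) \<and> (\<forall>x\<in>S. \<exists>y\<in>S. f x y = e \<and> f y x = e))"

definition nearfield_on :: "('a::group_add \<Rightarrow> 'a \<Rightarrow> 'a) \<Rightarrow> 'a set \<Rightarrow> bool" where
  "nearfield_on mul S \<longleftrightarrow> is_group_on (S - {0}) mul"

definition nearring_ideal :: "('a::group_add \<Rightarrow> 'a \<Rightarrow> 'a) \<Rightarrow> 'a set \<Rightarrow> bool" where
  "nearring_ideal mul I \<longleftrightarrow> normal_add_subgroup I \<and>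
     (\<forall>i\<in>I. \<forall>n. mul i n \<in> I) \<and>
     (\<forall>i\<in>I. \<forall>n m. mul n m - mul n (m + i) \<in> I)"

end

theory Submission imports Defs begin

lemma aut_basic:
  assumes "additive_aut f"
  shows "f 0 = 0" "f (-x) = - f x" "inj f" "surj f" "(f x = 0) = (x = 0)"
    "f (x + y) = f x + f y"
proof -
  have add: "\<And>x y. f (x + y) = f x + f y" using assms additive_aut_def by blast
  show "f (x + y) = f x + f y" by (rule add)
  have b: "bij f" using assms additive_aut_def by blast
  then show i: "inj f" and "surj f" by (auto simp: bij_def)
  have "f 0 = f 0 + f 0" using add[of 0 0] by simp
  then show z: "f 0 = 0" by (metis add_left_cancel add_0_right)
  have "f x + f (-x) = 0" using add[of x "-x"] z by simp
  then show "f (-x) = - f x" by (metis minus_unique)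
  show "(f x = 0) = (x = 0)" using i z by (metis injD)
qed
context
  fixes \<Phi> :: "('a::group_add \<Rightarrow> 'a) set" and R M :: "'a set"
  assumes data: "ferrero_data \<Phi> R M"
begin
lemma fd_all1: "(\<forall>\<phi>\<in>\<Phi>. additive_aut \<phi>)"
  using data unfolding ferrero_data_def by (elim conjE) assumption
lemma fd_all2: "id \<in> \<Phi>"
  using data unfolding ferrero_data_def by (elim conjE) assumption
lemma fd_all3: "(\<forall>\<phi>\<in>\<Phi>. \<forall>\<psi>\<in>\<Phi>. \<psi> \<circ> \<phi> \<in> \<Phi>)"
  using data unfolding ferrero_data_def by (elim conjE) assumption
lemma fd_all4: "(\<forall>\<phi>\<in>\<Phi>. inv \<phi> \<in> \<Phi>)"
  using data unfolding ferrero_data_def by (elim conjE) assumption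
lemma fd_all5: "(\<forall>\<phi>\<in>\<Phi>. \<phi> \<noteq> id \<longrightarrow> (\<forall>n. \<phi> n = n \<longrightarrow> n = 0))"
  using data unfolding ferrero_data_def by (elim conjE) assumption
lemma fd_all6: "0 \<notin> R"
  using data unfolding ferrero_data_def by (elim conjE) assumption
lemma fd_all7: "(\<forall>a. a \<noteq> 0 \<longrightarrow> (\<exists>!r. r \<in> R \<and> (\<exists>\<phi>\<in>\<Phi>. a = \<phi> r)))"
  using data unfolding ferrero_data_def by (elim conjE) assumption
lemma fd_aut: "\<phi> \<in> \<Phi> \<Longrightarrow> additive_aut \<phi>" using fd_all1 by blast
lemma fd_comp: "\<phi> \<in> \<Phi> \<Longrightarrow> \<psi> \<in> \<Phi> \<Longrightarrow> \<psi> \<circ> \<phi> \<in> \<Phi>" using fd_all3 by blast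
lemma fd_inv: "\<phi> \<in> \<Phi> \<Longrightarrow> inv \<phi> \<in> \<Phi>" using fd_all4 by blast
lemma fd_id: "id \<in> \<Phi>" using fd_all2 by blast
lemma fd_fpf: "\<phi> \<in> \<Phi> \<Longrightarrow> \<phi> n = n \<Longrightarrow> n \<noteq> 0 \<Longrightarrow> \<phi> = id" using fd_all5 by blast
lemma fd_0R: "0 \<notin> R" using fd_all6 by blast
lemma fd_ex: "a \<noteq> 0 \<Longrightarrow> \<exists>!r. r \<in> R \<and> (\<exists>\<phi>\<in>\<Phi>. a = \<phi> r)" using fd_all7 by blast

lemma fd_uniq:
  assumes "\<phi> \<in> \<Phi>" "\<psi> \<in> \<Phi>" "r \<in> R" "r' \<in> R" "\<phi> r = \<psi> r'"
  shows "r = r' \<and> \<phi> = \<psi>"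
proof -
  have r0: "r \<noteq> 0" using assms fd_0R by auto
  have "\<phi> r \<noteq> 0" using r0 aut_basic(5)[OF fd_aut[OF assms(1)]] by simp
  then have rr: "r = r'" using fd_ex[of "\<phi> r"] assms by metis
  have "(inv \<psi> \<circ> \<phi>) r = r" using assms rr aut_basic(3)[OF fd_aut[OF assms(2)]]
    by (simp add: inv_f_f)
  then have "inv \<psi> \<circ> \<phi> = id" using fd_fpf[of "inv \<psi> \<circ> \<phi>" r] r0 fd_comp fd_inv assms by blast
  then have "\<psi> \<circ> (inv \<psi> \<circ> \<phi>) = \<psi>" by simp
  then have "\<phi> = \<psi>" using aut_basic(4)[OF fd_aut[OF assms(2)]]
    by (simp add: fun_eq_iff surj_f_inv_f)
  with rr show ?thesis by simp
qed

lemma fd_rep: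
  assumes "a \<noteq> 0"
  shows "rep_of \<Phi> R a \<in> R \<and> phi_of \<Phi> R a \<in> \<Phi> \<and> a = phi_of \<Phi> R a (rep_of \<Phi> R a)"
proof -
  obtain r \<phi> where r: "r \<in> R" "\<phi> \<in> \<Phi>" "a = \<phi> r" using fd_ex[OF assms] by blast
  have "rep_of \<Phi> R a = r" unfolding rep_of_def
    apply (rule the_equality) using r fd_uniq by blast+
  moreover have "phi_of \<Phi> R a = \<phi>" unfolding phi_of_def
    apply (rule the_equality) using r fd_uniq by blast+
  ultimately show ?thesis using r by simp
qed

lemma fd_rep2:
  assumes "\<phi> \<in> \<Phi>" "r \<in> R"
  shows "rep_of \<Phi> R (\<phi> r) = r \<and> phi_of \<Phi> R (\<phi> r) = \<phi>"
proof -
  have "\<phi> r \<noteq> 0" using assms fd_0R aut_basic(5)[OF fd_aut[OF assms(1)]] by auto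
  from fd_rep[OF this] fd_uniq[OF _ assms(1) _ assms(2)] show ?thesis by metis
qed

lemma fd_cancel:
  assumes "\<phi> \<in> \<Phi>" "\<psi> \<in> \<Phi>" "a \<noteq> 0" "\<phi> a = \<psi> a"
  shows "\<phi> = \<psi>"
proof -
  let ?r = "rep_of \<Phi> R a" and ?\<chi> = "phi_of \<Phi> R a"
  have h: "?r \<in> R" "?\<chi> \<in> \<Phi>" "a = ?\<chi> ?r" using fd_rep[OF assms(3)] by auto
  have "(\<phi> \<circ> ?\<chi>) ?r = (\<psi> \<circ> ?\<chi>) ?r" using h assms by simp
  then have e: "\<phi> \<circ> ?\<chi> = \<psi> \<circ> ?\<chi>" using fd_uniq fd_comp h assms by blast
  have s: "surj ?\<chi>" using aut_basic(4)[OF fd_aut[OF h(2)]] .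
  show ?thesis
  proof
    fix y obtain x where "y = ?\<chi> x" using s by (metis surjD)
    then show "\<phi> y = \<psi> y" using e by (metis comp_apply)
  qed
qed

lemma fd_rep_img:
  assumes "\<phi> \<in> \<Phi>" "a \<noteq> 0"
  shows "rep_of \<Phi> R (\<phi> a) = rep_of \<Phi> R a"
proof -
  have h: "rep_of \<Phi> R a \<in> R" "phi_of \<Phi> R a \<in> \<Phi>" "a = phi_of \<Phi> R a (rep_of \<Phi> R a)" using fd_rep[OF assms(2)] by auto
  have "\<phi> a = (\<phi> \<circ> phi_of \<Phi> R a) (rep_of \<Phi> R a)" using h by simp
  then show ?thesis using fd_rep2[OF fd_comp[OF h(2) assms(1)] h(1)] by simp
qed

end
theorem mainTheorem6:
  fixes \<Phi> :: "('a::group_add \<Rightarrow> 'a) set" and R M :: "'a set" and d :: 'a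
  defines "mul \<equiv> ferrero_mult \<Phi> R M"
  defines "K \<equiv> zero_multipliers mul"
  defines "F \<equiv> range (mul d)"
  assumes data: "ferrero_data \<Phi> R M"
    and planar: "planar_nearring mul"
    and dD: "d \<in> distrib_elems mul" and d0: "d \<noteq> 0" and dK: "d \<notin> K"
  shows "F = (\<lambda>\<phi>. \<phi> d) ` \<Phi> \<union> {0}
       \<and> subnearring mul F \<and> nearfield_on mul F
       \<and> (\<exists>h. bij_betw h (F - {0}) \<Phi> \<and>
               (\<forall>x\<in>F - {0}. \<forall>y\<in>F - {0}. h (mul x y) = h y \<circ> h x))
       \<and> normal_add_subgroup K \<and> (\<forall>\<phi>\<in>\<Phi>. \<phi> ` K = K)
       \<and> (\<forall>n. \<exists>!p. fst p \<in> K \<and> snd p \<in> F \<and> n = fst p + snd p)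
       \<and> (\<forall>k\<in>K. \<forall>k'\<in>K. \<forall>f\<in>F. \<forall>f'\<in>F.
            mul (k + f) (k' + f') =
              (if f' = 0 then 0 else phi_of \<Phi> R f' k + phi_of \<Phi> R f' f))
       \<and> nearring_ideal mul K"
proof -
  note aut = fd_aut[OF data]
  note rep = fd_rep[OF data]
  note rep2 = fd_rep2[OF data]
  note comp = fd_comp[OF data]
  note finv = fd_inv[OF data]
  note cancel = fd_cancel[OF data]
  have assoc: "\<And>a b c. mul (mul a b) c = mul a (mul b c)"
    using planar planar_nearring_def nearring_def by metis
  have mulE: "\<And>a b. mul a b = (if b = 0 \<or> rep_of \<Phi> R b \<in> M then 0 else phi_of \<Phi> R b a)"
    by (simp add: mul_def ferrero_mult_def)
  have Kdef: "\<And>n. n \<in> K \<longleftrightarrow> (\<forall>x. mul x n = 0)" by (simp add: K_def zero_multipliers_def)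
  have mul_nz: "\<And>a b. b \<noteq> 0 \<Longrightarrow> rep_of \<Phi> R b \<notin> M \<Longrightarrow> mul a b = phi_of \<Phi> R b a"
    using mulE by simp
  have phid: "\<And>b. b \<noteq> 0 \<Longrightarrow> phi_of \<Phi> R b d \<noteq> 0"
    using rep aut aut_basic(5) d0 by metis
  have K_iff: "\<And>n. n \<in> K \<longleftrightarrow> n = 0 \<or> rep_of \<Phi> R n \<in> M"
  proof
    fix n assume "n \<in> K"
    then have "mul d n = 0" using Kdef by simp
    then show "n = 0 \<or> rep_of \<Phi> R n \<in> M" using mul_nz phid by metis
  qed (auto simp: Kdef mulE)
  have pi_add: "\<And>a b. mul d (a+b) = mul d a + mul d b" using dD distrib_elems_def by blast
  have pi0: "mul d 0 = 0" using mulE by simp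
  have pi_neg: "\<And>a. mul d (-a) = - mul d a"
  proof -
    fix a have "mul d a + mul d (-a) = 0" using pi_add[of a "-a"] pi0 by simp
    then show "mul d (-a) = - mul d a" by (metis minus_unique)
  qed
  have pi_K: "\<And>n. mul d n = 0 \<longleftrightarrow> n \<in> K"
    using K_iff mulE mul_nz phid by metis
  have piK0: "\<And>n. n \<in> K \<Longrightarrow> mul d n = 0" using pi_K by blast
  define r0 where "r0 = rep_of \<Phi> R d"
  define \<delta> where "\<delta> = phi_of \<Phi> R d"
  have r0R: "r0 \<in> R" and \<delta>\<Phi>: "\<delta> \<in> \<Phi>" and d_eq: "d = \<delta> r0"
    using rep[OF d0] r0_def \<delta>_def by auto
  have r0M: "r0 \<notin> M" using dK K_iff d0 r0_def by auto
  have nz: "\<And>\<phi> x. \<phi> \<in> \<Phi> \<Longrightarrow> \<phi> x = 0 \<longleftrightarrow> x = 0" using aut aut_basic(5) by metis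
  have r00: "r0 \<noteq> 0" using r0R fd_0R[OF data] by auto
  have mulF: "\<And>\<phi> \<psi> x. \<psi> \<in> \<Phi> \<Longrightarrow> mul x (\<psi> r0) = \<psi> x"
    using mul_nz rep2 r0R r0M nz r00 by metis
  have Fm: "\<And>f. f \<in> F \<longleftrightarrow> f = 0 \<or> (\<exists>\<phi>\<in>\<Phi>. f = \<phi> r0)"
  proof
    fix f assume "f \<in> F"
    then obtain b where b: "f = mul d b" using F_def by auto
    show "f = 0 \<or> (\<exists>\<phi>\<in>\<Phi>. f = \<phi> r0)"
    proof (cases "b = 0 \<or> rep_of \<Phi> R b \<in> M")
      case True then show ?thesis using b mulE by simp
    next
      case False
      then have "f = (phi_of \<Phi> R b \<circ> \<delta>) r0" using b mulE d_eq by simp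
      then show ?thesis using comp \<delta>\<Phi> rep False by metis
    qed
  next
    fix f assume "f = 0 \<or> (\<exists>\<phi>\<in>\<Phi>. f = \<phi> r0)"
    then show "f \<in> F"
    proof
      assume "f = 0" then show ?thesis using pi0 F_def by auto
    next
      assume "\<exists>\<phi>\<in>\<Phi>. f = \<phi> r0"
      then obtain \<phi> where p: "\<phi> \<in> \<Phi>" "f = \<phi> r0" by blast
      have c: "\<phi> \<circ> inv \<delta> \<in> \<Phi>" using p comp finv \<delta>\<Phi> by blast
      have "inv \<delta> d = r0" using d_eq aut_basic(3)[OF aut[OF \<delta>\<Phi>]] by (simp add: inv_f_f)
      then have "mul d ((\<phi> \<circ> inv \<delta>) r0) = f" using mulF[OF c] p by simp
      then show ?thesis using F_def by (metis rangeI)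
    qed
  qed
  have FmulNZ: "\<And>\<phi> \<psi>. \<phi> \<in> \<Phi> \<Longrightarrow> \<psi> \<in> \<Phi> \<Longrightarrow> mul (\<phi> r0) (\<psi> r0) = (\<psi> \<circ> \<phi>) r0"
    using mulF by simp
  have pi_inj: "\<And>f f'. f \<in> F \<Longrightarrow> f' \<in> F \<Longrightarrow> mul d f = mul d f' \<Longrightarrow> f = f'"
  proof -
    have v: "\<And>\<phi>. \<phi> \<in> \<Phi> \<Longrightarrow> mul d (\<phi> r0) = \<phi> d \<and> \<phi> d \<noteq> 0" using mulF nz d0 by metis
    fix f f' assume a: "f \<in> F" "f' \<in> F" "mul d f = mul d f'"
    show "f = f'"
      using a(1,2) unfolding Fm
    proof (elim disjE bexE)
      fix \<phi> \<psi> assume "\<phi> \<in> \<Phi>" "f = \<phi> r0" "\<psi> \<in> \<Phi>" "f' = \<psi> r0"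
      then show ?thesis using v a(3) cancel d0 by metis
    qed (use v a(3) pi0 in metis)+
  qed
  have F_alt: "F = (\<lambda>\<phi>. \<phi> d) ` \<Phi> \<union> {0}"
  proof (rule set_eqI)
    fix x
    have "(\<exists>\<phi>\<in>\<Phi>. x = \<phi> r0) \<longleftrightarrow> (\<exists>\<phi>\<in>\<Phi>. x = \<phi> d)"
    proof
      assume "\<exists>\<phi>\<in>\<Phi>. x = \<phi> r0"
      then obtain \<phi> where p: "\<phi> \<in> \<Phi>" "x = \<phi> r0" by blast
      have "inv \<delta> d = r0" using d_eq aut_basic(3)[OF aut[OF \<delta>\<Phi>]] by (simp add: inv_f_f)
      then have "x = (\<phi> \<circ> inv \<delta>) d" using p by simp
      then show "\<exists>\<phi>\<in>\<Phi>. x = \<phi> d" using p comp finv \<delta>\<Phi> by blast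
    next
      assume "\<exists>\<phi>\<in>\<Phi>. x = \<phi> d"
      then obtain \<phi> where p: "\<phi> \<in> \<Phi>" "x = \<phi> d" by blast
      then have "x = (\<phi> \<circ> \<delta>) r0" using d_eq by simp
      then show "\<exists>\<phi>\<in>\<Phi>. x = \<phi> r0" using p comp \<delta>\<Phi> by blast
    qed
    then show "x \<in> F \<longleftrightarrow> x \<in> (\<lambda>\<phi>. \<phi> d) ` \<Phi> \<union> {0}" using Fm by auto
  qed
  have F0: "0 \<in> F" using Fm by simp
  have sub: "subnearring mul F"
    unfolding subnearring_def add_subgroup_def
  proof (intro conjI ballI)
    show "0 \<in> F" by (rule F0)
  next
    fix x y assume "x \<in> F" "y \<in> F"
    then obtain a b where "x = mul d a" "y = mul d b" using F_def by auto
    then show "x + y \<in> F" using pi_add F_def by (metis rangeI)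
  next
    fix x assume "x \<in> F"
    then obtain a where "x = mul d a" using F_def by auto
    then show "- x \<in> F" using pi_neg F_def by (metis rangeI)
  next
    fix x y assume a: "x \<in> F" "y \<in> F"
    show "mul x y \<in> F"
    proof (cases "y = 0")
      case True then show ?thesis using mulE F0 by simp
    next
      case False
      then obtain \<psi> where q: "\<psi> \<in> \<Phi>" "y = \<psi> r0" using a Fm by auto
      show ?thesis
      proof (cases "x = 0")
        case True then show ?thesis using mulF q aut aut_basic(1) F0 by metis
      next
        case False
        then obtain \<phi> where "\<phi> \<in> \<Phi>" "x = \<phi> r0" using a Fm by auto
        then show ?thesis using q FmulNZ comp Fm by metis
      qed
    qed
  qed
  have FNZ: "\<And>x. x \<in> F - {0} \<longleftrightarrow> (\<exists>\<phi>\<in>\<Phi>. x = \<phi> r0)" using Fm nz r00 by auto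
  have nf: "nearfield_on mul F"
    unfolding nearfield_on_def is_group_on_def
  proof (intro conjI ballI)
    fix x y assume "x \<in> F - {0}" "y \<in> F - {0}"
    then obtain \<phi> \<psi> where "\<phi> \<in> \<Phi>" "x = \<phi> r0" "\<psi> \<in> \<Phi>" "y = \<psi> r0" using FNZ by metis
    then show "mul x y \<in> F - {0}" using FmulNZ comp FNZ by metis
  next
    fix x y z show "mul (mul x y) z = mul x (mul y z)" by (rule assoc)
  next
    have e: "r0 \<in> F - {0}" using FNZ fd_id[OF data] by (metis id_apply)
    show "\<exists>e\<in>F - {0}. (\<forall>x\<in>F - {0}. mul e x = x \<and> mul x e = x) \<and>
          (\<forall>x\<in>F - {0}. \<exists>y\<in>F - {0}. mul x y = e \<and> mul y x = e)"
    proof (intro bexI[OF _ e] conjI)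
      show "\<forall>x\<in>F - {0}. mul r0 x = x \<and> mul x r0 = x"
      proof
        fix x assume "x \<in> F - {0}"
        then obtain \<phi> where p: "\<phi> \<in> \<Phi>" "x = \<phi> r0" using FNZ by metis
        show "mul r0 x = x \<and> mul x r0 = x" using p mulF mulF[OF fd_id[OF data]] by simp
      qed
      show "\<forall>x\<in>F - {0}. \<exists>y\<in>F - {0}. mul x y = r0 \<and> mul y x = r0"
      proof
      fix x assume "x \<in> F - {0}"
      then obtain \<phi> where p: "\<phi> \<in> \<Phi>" "x = \<phi> r0" using FNZ by metis
      have i: "inv \<phi> \<in> \<Phi>" using finv p by blast
      have "mul x (inv \<phi> r0) = r0" using mulF[OF i] p aut_basic(3)[OF aut[OF p(1)]] by (simp add: inv_f_f)
      moreover have "mul (inv \<phi> r0) x = r0" using mulF[OF p(1)] p aut_basic(4)[OF aut[OF p(1)]] by (simp add: surj_f_inv_f)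
      moreover have "inv \<phi> r0 \<in> F - {0}" using FNZ i by blast
      ultimately show "\<exists>y\<in>F - {0}. mul x y = r0 \<and> mul y x = r0" by blast
      qed
    qed
  qed
  have hom: "\<exists>h. bij_betw h (F - {0}) \<Phi> \<and>
               (\<forall>x\<in>F - {0}. \<forall>y\<in>F - {0}. h (mul x y) = h y \<circ> h x)"
  proof (intro exI conjI ballI)
    show "bij_betw (phi_of \<Phi> R) (F - {0}) \<Phi>"
      unfolding bij_betw_def
    proof
      show "inj_on (phi_of \<Phi> R) (F - {0})"
      proof
        fix x y assume "x \<in> F - {0}" "y \<in> F - {0}" "phi_of \<Phi> R x = phi_of \<Phi> R y"
        then show "x = y" using FNZ rep2 r0R by metis
      qed
      show "phi_of \<Phi> R ` (F - {0}) = \<Phi>"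
      proof
        show "phi_of \<Phi> R ` (F - {0}) \<subseteq> \<Phi>"
        proof
          fix y assume "y \<in> phi_of \<Phi> R ` (F - {0})"
          then obtain x where x: "x \<in> F - {0}" "y = phi_of \<Phi> R x" by blast
          then obtain \<phi> where "\<phi> \<in> \<Phi>" "x = \<phi> r0" using FNZ by metis
          then show "y \<in> \<Phi>" using x rep2 r0R by metis
        qed
        show "\<Phi> \<subseteq> phi_of \<Phi> R ` (F - {0})"
        proof
          fix \<psi> assume p: "\<psi> \<in> \<Phi>"
          then have "\<psi> r0 \<in> F - {0}" using FNZ by blast
          then show "\<psi> \<in> phi_of \<Phi> R ` (F - {0})" using rep2[OF p r0R] by (metis imageI)
        qed
      qed
    qed
  next
    fix x y assume "x \<in> F - {0}" "y \<in> F - {0}"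
    then obtain \<phi> \<psi> where p: "\<phi> \<in> \<Phi>" "x = \<phi> r0" "\<psi> \<in> \<Phi>" "y = \<psi> r0" using FNZ by metis
    then show "phi_of \<Phi> R (mul x y) = phi_of \<Phi> R y \<circ> phi_of \<Phi> R x"
      using FmulNZ rep2 comp r0R by metis
  qed
  have normal: "normal_add_subgroup K"
    unfolding normal_add_subgroup_def add_subgroup_def
  proof (intro conjI ballI allI)
    show "0 \<in> K" using pi0 pi_K by blast
  next
    fix x y assume "x \<in> K" "y \<in> K"
    then have "mul d x = 0" "mul d y = 0" using pi_K by blast+
    then have "mul d (x + y) = 0" using pi_add by simp
    then show "x + y \<in> K" using pi_K by blast
  next
    fix x assume "x \<in> K"
    then have "mul d x = 0" using pi_K by blast
    then have "mul d (-x) = 0" using pi_neg by simp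
    then show "-x \<in> K" using pi_K by blast
  next
    fix n k assume "k \<in> K"
    then have "mul d k = 0" using pi_K by blast
    moreover have "mul d (n + k + - n) = mul d n + mul d k + - mul d n" by (simp only: pi_add pi_neg)
    ultimately have "mul d (n + k + - n) = 0" by simp
    then show "n + k + - n \<in> K" using pi_K by blast
  qed
  have Kadd: "\<And>x y. x \<in> K \<Longrightarrow> y \<in> K \<Longrightarrow> x + y \<in> K" using normal
    unfolding normal_add_subgroup_def add_subgroup_def by blast
  have Kimg1: "\<And>\<phi> k. \<phi> \<in> \<Phi> \<Longrightarrow> k \<in> K \<Longrightarrow> \<phi> k \<in> K"
  proof -
    fix \<phi> k assume a: "\<phi> \<in> \<Phi>" "k \<in> K"
    show "\<phi> k \<in> K"
    proof (cases "k = 0")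
      case True then show ?thesis using a aut_basic(1)[OF aut[OF a(1)]] by simp
    next
      case False
      then have "rep_of \<Phi> R k \<in> M" using a K_iff by blast
      then have "rep_of \<Phi> R (\<phi> k) \<in> M" using fd_rep_img[OF data a(1) False] by simp
      then show ?thesis using K_iff by blast
    qed
  qed
  have inv: "\<forall>\<phi>\<in>\<Phi>. \<phi> ` K = K"
  proof
    fix \<phi> assume p: "\<phi> \<in> \<Phi>"
    show "\<phi> ` K = K"
    proof
      show "\<phi> ` K \<subseteq> K" using Kimg1 p by blast
      show "K \<subseteq> \<phi> ` K"
      proof
        fix k assume "k \<in> K"
        then have "inv \<phi> k \<in> K" using Kimg1 finv p by blast
        moreover have "k = \<phi> (inv \<phi> k)" using aut_basic(4)[OF aut[OF p]] by (simp add: surj_f_inv_f)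
        ultimately show "k \<in> \<phi> ` K" by blast
      qed
    qed
  qed
  have samephi: "\<And>a b. a \<notin> K \<Longrightarrow> mul d a = mul d b \<Longrightarrow> b \<notin> K \<and> phi_of \<Phi> R b = phi_of \<Phi> R a"
  proof -
    fix a b assume a: "a \<notin> K" "mul d a = mul d b"
    then have b: "b \<notin> K" using pi_K by metis
    have "phi_of \<Phi> R a d = phi_of \<Phi> R b d" using a b K_iff mul_nz by metis
    then have "phi_of \<Phi> R b = phi_of \<Phi> R a" using cancel rep a b K_iff d0 by metis
    with b show "b \<notin> K \<and> phi_of \<Phi> R b = phi_of \<Phi> R a" by simp
  qed
  have decomp: "\<forall>n. \<exists>!p. fst p \<in> K \<and> snd p \<in> F \<and> n = fst p + snd p"
  proof
    fix n
    have ex: "\<exists>k f. k \<in> K \<and> f \<in> F \<and> n = k + f"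
    proof (cases "n \<in> K")
      case True then show ?thesis using F0 by (intro exI[of _ n] exI[of _ 0]) simp
    next
      case False
      then have nn: "n \<noteq> 0" "rep_of \<Phi> R n \<notin> M" using K_iff by auto
      define f where "f = phi_of \<Phi> R n r0"
      have pf: "phi_of \<Phi> R n \<in> \<Phi>" using rep nn by blast
      have fF: "f \<in> F" using Fm pf f_def by blast
      have "mul d f = phi_of \<Phi> R n d" using mulF[OF pf] f_def by simp
      moreover have "mul d n = phi_of \<Phi> R n d" using mul_nz nn by simp
      ultimately have "mul d (n - f) = 0" using pi_add pi_neg
        by (metis diff_conv_add_uminus right_minus)
      then have "n - f \<in> K" using pi_K by simp
      then show ?thesis using fF by (intro exI[of _ "n - f"] exI[of _ f]) simp
    qed
    then obtain k f where kf: "k \<in> K" "f \<in> F" "n = k + f" by blast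
    show "\<exists>!p. fst p \<in> K \<and> snd p \<in> F \<and> n = fst p + snd p"
    proof (rule ex1I[of _ "(k, f)"])
      show "fst (k, f) \<in> K \<and> snd (k, f) \<in> F \<and> n = fst (k, f) + snd (k, f)" using kf by simp
    next
      fix p assume p: "fst p \<in> K \<and> snd p \<in> F \<and> n = fst p + snd p"
      have "mul d n = mul d f" using kf pi_add piK0 by simp
      moreover have "mul d n = mul d (snd p)" using p pi_add piK0 by simp
      ultimately have "snd p = f" using pi_inj p kf by metis
      moreover then have "fst p = k" using p kf by (metis add_right_cancel)
      ultimately show "p = (k, f)" by (simp add: prod_eq_iff)
    qed
  qed
  have prod: "\<forall>k\<in>K. \<forall>k'\<in>K. \<forall>f\<in>F. \<forall>f'\<in>F.
            mul (k + f) (k' + f') =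
              (if f' = 0 then 0 else phi_of \<Phi> R f' k + phi_of \<Phi> R f' f)"
  proof (intro ballI)
    fix k k' f f' assume a: "k \<in> K" "k' \<in> K" "f \<in> F" "f' \<in> F"
    show "mul (k + f) (k' + f') =
              (if f' = 0 then 0 else phi_of \<Phi> R f' k + phi_of \<Phi> R f' f)"
    proof (cases "f' = 0")
      case True then show ?thesis using a Kdef by simp
    next
      case False
      then have f'K: "f' \<notin> K" using pi_K pi_inj a F0 pi0 by metis
      have "mul d (k' + f') = mul d f'" using pi_add piK0 a by simp
      then have s: "k' + f' \<notin> K" "phi_of \<Phi> R (k' + f') = phi_of \<Phi> R f'" using samephi f'K by metis+
      then have "mul (k + f) (k' + f') = phi_of \<Phi> R f' (k + f)" using K_iff mul_nz by metis
      also have "\<dots> = phi_of \<Phi> R f' k + phi_of \<Phi> R f' f"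
        using aut_basic(6)[OF aut] rep False by metis
      finally show ?thesis using False by simp
    qed
  qed
  have ideal: "nearring_ideal mul K"
    unfolding nearring_ideal_def
  proof (intro conjI ballI allI)
    show "normal_add_subgroup K" by (rule normal)
  next
    fix i n assume i: "i \<in> K"
    show "mul i n \<in> K"
    proof (cases "n = 0 \<or> rep_of \<Phi> R n \<in> M")
      case True then show ?thesis using mulE pi0 pi_K by metis
    next
      case False then show ?thesis using mul_nz Kimg1 rep i by metis
    qed
  next
    fix i n m assume i: "i \<in> K"
    show "mul n m - mul n (m + i) \<in> K"
    proof (cases "m \<in> K")
      case True
      then have "m + i \<in> K" using Kadd i by blast
      then show ?thesis using True Kdef pi0 pi_K by (metis diff_self)
    next
      case False
      have "mul d (m + i) = mul d m" using pi_add piK0 i by simp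
      then have s: "m + i \<notin> K" "phi_of \<Phi> R (m + i) = phi_of \<Phi> R m" using samephi False by metis+
      then have "mul n m = mul n (m + i)" using False K_iff mul_nz by metis
      then show ?thesis using pi0 pi_K by (metis diff_self)
    qed
  qed
  show ?thesis using F_alt sub nf hom normal inv decomp prod ideal by blast
qed

end
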